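(* Consider any sequences $\{(x_k,y_k,\gamma_k)\}_{k\ge0}$, $\{(\tilde x_k,u_k,\tilde\gamma_k)\}_{k\ge1}$ generated by the inexact symmetric proximal ADMM described in the context, and set $p_k=B(y_k-y_{k-1})$, $q_k=-\beta(A\tilde x_k+By_k-b)$ for $k\ge1$. Then: (a) $\min\{2\vartheta\langle p_1,q_1\rangle,\ -\|y_1-y_0\|_H^2\}\ge-4d_0$; (b) for every $k\ge2$, $$2(1+\tau)\langle p_k,q_k\rangle\ge2(1-\theta)\langle p_k,q_{k-1}\rangle-2\tau\beta\|p_k\|^2+\|y_k-y_{k-1}\|_H^2-\|y_{k-1}-y_{k-2}\|_H^2.$$
   Context: Let $f:\mathbb{R}^n\to(-\infty,\infty]$ and $g:\mathbb{R}^p\to(-\infty,\infty]$ be proper closed convex functions, $A\in\mathbb{R}^{m\times n}$, $B\in\mathbb{R}^{m\times p}$, $b\in\mathbb{R}^m$ (problem: $\min\{f(x)+g(y):Ax+By=b\}$). Standing assumption: there exists $(x^*,y^*,\gamma^* )$ solving the Lagrangian system $0\in\partial f(x)-A^*\gamma$, $0\in\partial g(y)-B^*\gamma$, $0=Ax+By-b$. Here $\partial$ is the subdifferential, $A^*$ the transpose, $\mathbb{S}^n_{++}$ ($\mathbb{S}^p_+$) the symmetric positive definite (semidefinite) matrices, and $\|z\|_Q=\sqrt{\langle Qz,z\rangle}$ for $Q$ positive semidefinite. Algorithm (inexact symmetric proximal ADMM): given $(x_0,y_0,\gamma_0)\in\mathbb{R}^n\times\mathbb{R}^p\times\mathbb{R}^m$,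 $\beta>0$, $\tilde\sigma,\hat\sigma\in[0,1)$, $G\in\mathbb{S}^n_{++}$, $H\in\mathbb{S}^p_+$, and $(\tau,\theta)\in\mathcal R_{\tilde\sigma}:=\{(\tau,\theta):\tau\in(-1,1-\tilde\sigma),\ \tau+\theta>0,\ (1-\tau^2)(2-\tau-\theta-\tilde\sigma)-(1-\theta)^2(1-\tau-\tilde\sigma)>0\}$. For $k=1,2,\dots$: compute $(\tilde x_k,u_k)$ with $u_k\in\partial f(\tilde x_k)-A^*\tilde\gamma_k$ and $\|\tilde x_k-x_{k-1}+G^{-1}u_k\|_G^2\le\frac{\tilde\sigma}{\beta}\|\tilde\gamma_k-\gamma_{k-1}\|^2+\hat\sigma\|\tilde x_k-x_{k-1}\|_G^2$, where $\tilde\gamma_k=\gamma_{k-1}-\beta(A\tilde x_k+By_{k-1}-b)$; set $\gamma_{k-1/2}=\gamma_{k-1}-\tau\beta(A\tilde x_k+By_{k-1}-b)$; let $y_k$ be an optimal solution of $\min_y\{g(y)-\langle\gamma_{k-1/2},By\rangle+\frac\beta2\|A\tilde x_k+By-b\|^2+\frac12\|y-y_{k-1}\|_H^2\}$; set $x_k=x_{k-1}-G^{-1}u_k$ and $\gamma_k=\gamma_{k-1/2}-\theta\beta(A\tilde x_k+By_k-b)$. Definitions: $T(x,y,\gamma)=(\partial f(x)-A^*\gamma,\ \partial g(y)-B^*\gamma,\ Ax+By-b)$; $M=\begin{bmatrix}G&0&0\\0&H+\frac{(\tau-\tau\theta+\theta)\beta}{\tau+\theta}B^*B&-\frac{\tau}{\tau+\theta}B^*\\0&-\frac{\tau}{\tau+\theta}B&\frac{1}{(\tau+\theta)\beta}I\end{bmatrix}$;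 $z_0=(x_0,y_0,\gamma_0)$; $d_0=\inf\{\|z^*-z_0\|_M^2: z^*\in T^{-1}(0)\}$; $\vartheta=\sqrt{(3-3\tau-2\tilde\sigma)(4-\tau-\theta-2\tilde\sigma)}-2(1-\tau-\tilde\sigma)$. *)

theory Defs
  imports "HOL-Analysis.Analysis"
begin

text \<open>Extended-real-valued functions f : R^n -> (-inf, +inf], encoded as ereal-valued
functions that never take the value -inf.\<close>

definition epigraph :: "('a \<Rightarrow> ereal) \<Rightarrow> ('a \<times> real) set" where
  "epigraph f = {(x, t). f x \<le> ereal t}"

definition proper_fun :: "('a \<Rightarrow> ereal) \<Rightarrow> bool" where
  "proper_fun f \<longleftrightarrow> (\<forall>x. f x \<noteq> -\<infinity>) \<and> (\<exists>x. f x \<noteq> \<infinity>)"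

definition convex_fun :: "('a::real_vector \<Rightarrow> ereal) \<Rightarrow> bool" where
  "convex_fun f \<longleftrightarrow> convex (epigraph f)"

definition closed_fun :: "('a::topological_space \<Rightarrow> ereal) \<Rightarrow> bool" where
  "closed_fun f \<longleftrightarrow> closed (epigraph f)"

definition subdiff :: "('a::real_inner \<Rightarrow> ereal) \<Rightarrow> 'a \<Rightarrow> 'a set" where
  "subdiff f x = {v. f x \<noteq> \<infinity> \<and> (\<forall>z. f z \<ge> f x + ereal (v \<bullet> (z - x)))}"

definition qnorm2 :: "real^'n^'n \<Rightarrow> real^'n \<Rightarrow> real" where
  "qnorm2 Q z = (Q *v z) \<bullet> z"

definition sym_mat :: "real^'n^'n \<Rightarrow> bool" where
  "sym_mat Q \<longleftrightarrow> transpose Q = Q"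

definition pos_def :: "real^'n^'n \<Rightarrow> bool" where
  "pos_def Q \<longleftrightarrow> sym_mat Q \<and> (\<forall>z. z \<noteq> 0 \<longrightarrow> qnorm2 Q z > 0)"

definition pos_semidef :: "real^'n^'n \<Rightarrow> bool" where
  "pos_semidef Q \<longleftrightarrow> sym_mat Q \<and> (\<forall>z. qnorm2 Q z \<ge> 0)"

definition admissible_region :: "real \<Rightarrow> (real \<times> real) set" where
  "admissible_region s = {(\<tau>, \<theta>). -1 < \<tau> \<and> \<tau> < 1 - s \<and> \<tau> + \<theta> > 0 \<and>
      (1 - \<tau>^2) * (2 - \<tau> - \<theta> - s) - (1 - \<theta>)^2 * (1 - \<tau> - s) > 0}"

text \<open>Zeros of the operator T(x,y,gamma) = (df(x) - A^* gamma, dg(y) - B^* gamma, Ax+By-b).\<close>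
definition T_zeros ::
  "(real^'n \<Rightarrow> ereal) \<Rightarrow> (real^'p \<Rightarrow> ereal) \<Rightarrow> real^'n^'m \<Rightarrow> real^'p^'m \<Rightarrow> real^'m
     \<Rightarrow> ((real^'n) \<times> (real^'p) \<times> (real^'m)) set" where
  "T_zeros f g A B b = {(x, y, \<gamma>).
      transpose A *v \<gamma> \<in> subdiff f x \<and> transpose B *v \<gamma> \<in> subdiff g y \<and>
      A *v x + B *v y - b = 0}"

text \<open>||(x,y,gamma)||_M^2 for the block matrix M of the paper, written out:
  <Gx,x> + <Hy,y> + (tau - tau theta + theta) beta/(tau+theta) ||By||^2
   - 2 tau/(tau+theta) <By,gamma> + 1/((tau+theta) beta) ||gamma||^2.\<close>
definition Mnorm2 ::
  "real^'n^'n \<Rightarrow> real^'p^'p \<Rightarrow> real^'p^'m \<Rightarrow> real \<Rightarrow> real \<Rightarrow> real \<Rightarrow>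
     (real^'n) \<times> (real^'p) \<times> (real^'m) \<Rightarrow> real" where
  "Mnorm2 G H B \<beta> \<tau> \<theta> z = (case z of (x, y, \<gamma>) \<Rightarrow>
      qnorm2 G x + qnorm2 H y
      + ((\<tau> - \<tau> * \<theta> + \<theta>) * \<beta> / (\<tau> + \<theta>)) * ((B *v y) \<bullet> (B *v y))
      - 2 * (\<tau> / (\<tau> + \<theta>)) * ((B *v y) \<bullet> \<gamma>)
      + (1 / ((\<tau> + \<theta>) * \<beta>)) * (\<gamma> \<bullet> \<gamma>))"

definition d0 ::
  "(real^'n \<Rightarrow> ereal) \<Rightarrow> (real^'p \<Rightarrow> ereal) \<Rightarrow> real^'n^'m \<Rightarrow> real^'p^'m \<Rightarrow> real^'m \<Rightarrow>
   real^'n^'n \<Rightarrow> real^'p^'p \<Rightarrow> real \<Rightarrow> real \<Rightarrow> real \<Rightarrow>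
   (real^'n) \<times> (real^'p) \<times> (real^'m) \<Rightarrow> ereal" where
  "d0 f g A B b G H \<beta> \<tau> \<theta> z0 =
     (INF zs \<in> T_zeros f g A B b. ereal (Mnorm2 G H B \<beta> \<tau> \<theta> (zs - z0)))"

definition vartheta :: "real \<Rightarrow> real \<Rightarrow> real \<Rightarrow> real" where
  "vartheta \<tau> \<theta> s = sqrt ((3 - 3 * \<tau> - 2 * s) * (4 - \<tau> - \<theta> - 2 * s)) - 2 * (1 - \<tau> - s)"

end

theory Submission
  imports Defs
begin


lemma poly_aux:
  fixes a m K :: real
  assumes "0 < a" "a \<le> m" "m < 2" "K = m * (2 - m)"
  shows "a * (K + 4*a)^2 + K * (K + 4*a) * (2*a + m) - K * a * (2*a + m)^2 \<ge> 0"
proof -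
  have m0: "0 < m" using assms by linarith
  have K0: "0 < K" using assms m0 by simp
  have "K = 1 - (m-1)^2" using assms(4) by (simp add: power2_eq_square algebra_simps)
  then have K1: "K \<le> 1" by simp
  have e: "a * (K + 4*a)^2 + K * (K + 4*a) * (2*a + m) - K * a * (2*a + m)^2
     = 16*a^3 + 16*a^2*K + 3*a*K^2 + m*K^2 + 4*a*m*K - 4*a^3*K - 4*a^2*m*K - a*m^2*K"
    by (simp add: algebra_simps power2_eq_square power3_eq_cube)
  have i1: "4*a^3*K \<le> 4*a^3" using K1 \<open>0<a\<close> by simp
  have i2': "m*(4*a^2*K) \<le> 2*(4*a^2*K)" by (rule mult_right_mono) (use assms K0 in auto)
  have i2: "4*a^2*m*K \<le> 8*a^2*K" using i2' by (simp add: algebra_simps)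
  have i3': "m*(a*m*K) \<le> 2*(a*m*K)" by (rule mult_right_mono) (use assms K0 m0 in auto)
  have i3: "a*m^2*K \<le> 2*a*m*K" using i3' by (simp add: algebra_simps power2_eq_square)
  have p: "0 \<le> 12*a^3 + 8*a^2*K + 3*a*K^2 + m*K^2 + 2*a*m*K" using \<open>0<a\<close> K0 m0 by simp
  show ?thesis unfolding e using i1 i2 i3 p by linarith
qed


lemma XY_ge:
  fixes \<tau> \<theta> \<sigma> :: real
  assumes "0 \<le> \<sigma>" "-1 < \<tau>" "\<tau> < 1 - \<sigma>" "\<tau> + \<theta> > 0"
    "(1 - \<tau>^2) * (2 - \<tau> - \<theta> - \<sigma>) - (1 - \<theta>)^2 * (1 - \<tau> - \<sigma>) > 0"
  shows "4 * (1 - \<tau> - \<sigma>)^2 \<le> (3 - 3 * \<tau> - 2 * \<sigma>) * (4 - \<tau> - \<theta> - 2 * \<sigma>)"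
proof -
  define a where "a = 1 - \<tau> - \<sigma>"
  define m where "m = 1 - \<tau>"
  define K where "K = m * (2 - m)"
  define t where "t = \<theta> - 1"
  have a0: "0 < a" "a \<le> m" "m < 2" using assms by (auto simp: a_def m_def)
  have K0: "0 < K" using a0 by (simp add: K_def)
  have F: "K * (a - t) - t^2 * a > 0"
  proof -
    have "K * (a - t) - t^2 * a = (1 - \<tau>^2) * (2 - \<tau> - \<theta> - \<sigma>) - (1 - \<theta>)^2 * (1 - \<tau> - \<sigma>)"
      unfolding K_def m_def a_def t_def by (simp add: algebra_simps power2_eq_square)
    then show ?thesis using assms(5) by simp
  qed
  have goal_eq: "(3 - 3 * \<tau> - 2 * \<sigma>) * (4 - \<tau> - \<theta> - 2 * \<sigma>) - 4 * (1 - \<tau> - \<sigma>)^2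
      = K + 4*a - t*(2*a+m)"
    unfolding K_def m_def a_def t_def by (simp add: algebra_simps power2_eq_square)
  show ?thesis
  proof (rule ccontr)
    assume "\<not> ?thesis"
    then have T: "t*(2*a+m) > K + 4*a" using goal_eq by linarith
    define T where "T = t*(2*a+m)"
    define U where "U = K + 4*a"
    have U0: "U > 0" using K0 a0 by (simp add: U_def)
    have TU: "T > U" using T by (simp add: T_def U_def)
    have S0: "2*a+m > 0" using a0 by simp
    have "K * a * (2*a+m)^2 - K * T * (2*a+m) - a * T^2 = (2*a+m)^2 * (K * (a - t) - t^2 * a)"
      by (simp add: T_def algebra_simps power2_eq_square)
    also have "\<dots> > 0" using F S0 by simp
    finally have A: "K * a * (2*a+m)^2 - K * T * (2*a+m) - a * T^2 > 0" .
    have B1: "K * U * (2*a+m) \<le> K * T * (2*a+m)" using TU K0 S0 by simp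
    have B2: "a * U^2 \<le> a * T^2" using TU U0 a0 by (simp add: power_mono)
    have P: "a * U^2 + K * U * (2*a + m) - K * a * (2*a + m)^2 \<ge> 0"
      using poly_aux[OF a0 K_def] by (simp add: U_def)
    show False using A B1 B2 P by linarith
  qed
qed


lemma sym_swap: "sym_mat G \<Longrightarrow> (G *v a) \<bullet> b = (G *v b) \<bullet> (a::real^'n)"
  unfolding sym_mat_def by (metis dot_lmul_matrix inner_commute transpose_matrix_vector)

lemma xpart:
  assumes "sym_mat G"
  shows "4 * qnorm2 G X0 = qnorm2 G (2 *\<^sub>R X0 + w) + 2*(qnorm2 G Xt - qnorm2 G (Xt + w))
     + qnorm2 G w + 4 * ((G *v w) \<bullet> (Xt - X0))"
proof -
  have s1: "(G *v X0) \<bullet> w = (G *v w) \<bullet> X0" by (rule sym_swap[OF assms])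
  have s2: "(G *v Xt) \<bullet> w = (G *v w) \<bullet> Xt" by (rule sym_swap[OF assms])
  show ?thesis unfolding qnorm2_def
    by (simp add: matrix_vector_right_distrib matrix_vector_mult_diff_distrib
        matrix_vector_mult_scaleR inner_add_left inner_add_right inner_diff_left inner_diff_right s1 s2)
qed

lemma hpart:
  assumes "sym_mat H"
  shows "4 * qnorm2 H Y = qnorm2 H (2 *\<^sub>R Y - e) + 3 * qnorm2 H e
     + 2 * ((H *v (Y - e)) \<bullet> e + (H *v e) \<bullet> (Y - e))"
proof -
  have s1: "(H *v Y) \<bullet> e = (H *v e) \<bullet> Y" by (rule sym_swap[OF assms])
  show ?thesis unfolding qnorm2_def
    by (simp add: matrix_vector_right_distrib matrix_vector_mult_diff_distrib
        matrix_vector_mult_scaleR inner_add_left inner_add_right inner_diff_left inner_diff_right s1)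
qed

definition Nf :: "real \<Rightarrow> real \<Rightarrow> real \<Rightarrow> real^'m \<Rightarrow> real^'m \<Rightarrow> real" where
  "Nf \<beta> \<tau> \<theta> w g = ((\<tau> - \<tau> * \<theta> + \<theta>) * \<beta> / (\<tau> + \<theta>)) * (w \<bullet> w)
      - 2 * (\<tau> / (\<tau> + \<theta>)) * (w \<bullet> g) + (1 / ((\<tau> + \<theta>) * \<beta>)) * (g \<bullet> g)"

lemma mpart_scalar:
  fixes \<beta> \<tau> \<theta> yy yg gg yp yq gp gq pp pq qq :: real
  assumes "\<beta> > 0" "\<tau> + \<theta> > 0"
  defines "s \<equiv> \<tau> + \<theta>"
  shows "4 * (((\<tau> - \<tau> * \<theta> + \<theta>) * \<beta> / s) * yy - 2 * (\<tau> / s) * yg + (1 / (s * \<beta>)) * gg)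
     - (((\<tau> - \<tau> * \<theta> + \<theta>) * \<beta> / s) * (4*yy - 4*yp + pp)
        - 2 * (\<tau> / s) * (4*yg - 2* s *yq - 2*\<tau>*\<beta>*yp - 2*gp + s*pq + \<tau>*\<beta>*pp)
        + (1 / (s * \<beta>)) * (4*gg + s^2*qq + \<tau>^2*\<beta>^2*pp - 4* s *gq - 4*\<tau>*\<beta>*gp + 2* s *\<tau>*\<beta>*pq))
     - 4 * ((gq - qq - \<beta>*pq)/\<beta> + (-\<tau>*yq + \<tau>*pq + (1-\<tau>)*\<beta>*yp - (1-\<tau>)*\<beta>*pp))
   = ((3-3*\<tau>)*\<beta>^2*pp + (4-\<tau>-\<theta>)*qq + 4*(1-\<tau>)*\<beta>*pq) / \<beta>"
proof -
  have s: "s \<noteq> 0" "\<beta> \<noteq> 0" "s * \<beta> \<noteq> 0" using assms by auto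
  show ?thesis
    apply (simp add: field_simps s power2_eq_square)
    apply (simp add: s_def algebra_simps)
    done
qed

lemma mpart:
  fixes Y0 G0 P q :: "real^'m"
  assumes "\<beta> > 0" "\<tau> + \<theta> > 0"
  shows "4 * Nf \<beta> \<tau> \<theta> Y0 G0
     - Nf \<beta> \<tau> \<theta> (2 *\<^sub>R Y0 - P) (2 *\<^sub>R G0 - ((\<tau>+\<theta>) *\<^sub>R q + (\<tau>*\<beta>) *\<^sub>R P))
     - 4 * ((G0 - q - \<beta> *\<^sub>R P) \<bullet> q / \<beta> + ((- \<tau>) *\<^sub>R q + ((1-\<tau>)*\<beta>) *\<^sub>R P) \<bullet> (Y0 - P))
   = ((3-3*\<tau>)*\<beta>^2*(P\<bullet>P) + (4-\<tau>-\<theta>)*(q\<bullet>q) + 4*(1-\<tau>)*\<beta>*(P\<bullet>q)) / \<beta>"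
proof -
  have e1: "(2 *\<^sub>R Y0 - P) \<bullet> (2 *\<^sub>R Y0 - P) = 4*(Y0\<bullet>Y0) - 4*(Y0\<bullet>P) + P\<bullet>P"
    by (simp add: inner_add_left inner_add_right inner_diff_left inner_diff_right inner_commute[of P Y0])
  have e2: "(2 *\<^sub>R Y0 - P) \<bullet> (2 *\<^sub>R G0 - ((\<tau>+\<theta>) *\<^sub>R q + (\<tau>*\<beta>) *\<^sub>R P))
     = 4*(Y0\<bullet>G0) - 2*(\<tau>+\<theta>)*(Y0\<bullet>q) - 2*\<tau>*\<beta>*(Y0\<bullet>P) - 2*(G0\<bullet>P) + (\<tau>+\<theta>)*(P\<bullet>q) + \<tau>*\<beta>*(P\<bullet>P)"
    by (simp add: inner_add_left inner_add_right inner_diff_left inner_diff_right inner_commute[of P G0] algebra_simps)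
  have e3: "(2 *\<^sub>R G0 - ((\<tau>+\<theta>) *\<^sub>R q + (\<tau>*\<beta>) *\<^sub>R P)) \<bullet> (2 *\<^sub>R G0 - ((\<tau>+\<theta>) *\<^sub>R q + (\<tau>*\<beta>) *\<^sub>R P))
     = 4*(G0\<bullet>G0) + (\<tau>+\<theta>)^2*(q\<bullet>q) + \<tau>^2*\<beta>^2*(P\<bullet>P) - 4*(\<tau>+\<theta>)*(G0\<bullet>q) - 4*\<tau>*\<beta>*(G0\<bullet>P) + 2*(\<tau>+\<theta>)*\<tau>*\<beta>*(P\<bullet>q)"
    by (simp add: inner_add_left inner_add_right inner_diff_left inner_diff_right inner_commute[of P G0]
        inner_commute[of q G0] inner_commute[of q P] algebra_simps power2_eq_square)
  have e4: "(G0 - q - \<beta> *\<^sub>R P) \<bullet> q = G0\<bullet>q - q\<bullet>q - \<beta>*(P\<bullet>q)"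
    by (simp add: inner_diff_left)
  have e5: "((- \<tau>) *\<^sub>R q + ((1-\<tau>)*\<beta>) *\<^sub>R P) \<bullet> (Y0 - P) = -\<tau>*(Y0\<bullet>q) + \<tau>*(P\<bullet>q) + (1-\<tau>)*\<beta>*(Y0\<bullet>P) - (1-\<tau>)*\<beta>*(P\<bullet>P)"
    by (simp add: inner_add_left inner_diff_right inner_commute[of q Y0] inner_commute[of q P] inner_commute[of P Y0] algebra_simps)
  show ?thesis unfolding Nf_def e1 e2 e3 e4 e5
    using mpart_scalar[OF assms, where yy="Y0\<bullet>Y0" and yg="Y0\<bullet>G0" and gg="G0\<bullet>G0" and yp="Y0\<bullet>P" and yq="Y0\<bullet>q" and gp="G0\<bullet>P" and gq="G0\<bullet>q" and pp="P\<bullet>P" and pq="P\<bullet>q" and qq="q\<bullet>q"]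
    by simp
qed


lemma convex_ineq:
  fixes g :: "'a::real_vector \<Rightarrow> ereal"
  assumes "convex_fun g" "g x = ereal a" "g y = ereal b" "0 \<le> t" "t \<le> 1"
  shows "g ((1-t) *\<^sub>R x + t *\<^sub>R y) \<le> ereal ((1-t)*a + t*b)"
proof -
  have "(x, a) \<in> epigraph g" "(y, b) \<in> epigraph g" using assms by (auto simp: epigraph_def)
  then have "(1-t) *\<^sub>R (x, a) + t *\<^sub>R (y, b) \<in> epigraph g"
    using assms(1,4,5) unfolding convex_fun_def by (intro convexD) auto
  then show ?thesis by (simp add: epigraph_def)
qed

lemma combine2:
  assumes "\<And>x. g x \<noteq> -\<infinity>" "g a \<noteq> \<infinity>" "g b \<noteq> \<infinity>"
    "g b \<ge> g a + ereal \<alpha>" "g a \<ge> g b + ereal \<gamma>"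
  shows "\<alpha> + \<gamma> \<le> 0"
proof -
  obtain ra where ra: "g a = ereal ra" using assms(1,2) by (cases "g a") auto
  obtain rb where rb: "g b = ereal rb" using assms(1,3) by (cases "g b") auto
  show ?thesis using assms(4,5) ra rb by simp
qed

lemma small_t:
  fixes A C :: real
  assumes "\<And>t. 0 < t \<Longrightarrow> t \<le> 1 \<Longrightarrow> A + t * C \<ge> 0"
  shows "A \<ge> 0"
proof (rule ccontr)
  assume "\<not> A \<ge> 0"
  then have A: "A < 0" by simp
  define t where "t = min 1 ((- A) / (2 * \<bar>C\<bar> + 1))"
  have den: "2 * \<bar>C\<bar> + 1 > 0" by simp
  have "A / (2 * \<bar>C\<bar> + 1) < 0" using A den by (simp add: divide_neg_pos)
  then have t0: "0 < t" "t \<le> 1" using A by (auto simp: t_def)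
  have "t * \<bar>C\<bar> \<le> ((- A) / (2 * \<bar>C\<bar> + 1)) * \<bar>C\<bar>"
    by (rule mult_right_mono) (auto simp: t_def)
  also have "\<dots> < - A"
  proof -
    have "(- A) * \<bar>C\<bar> < (- A) * (2 * \<bar>C\<bar> + 1)" using A by (intro mult_strict_left_mono) auto
    then show ?thesis using den by (simp add: less_divide_eq mult.commute)
  qed
  finally have "t * \<bar>C\<bar> < - A" .
  moreover have "t * C \<le> t * \<bar>C\<bar>" proof -
    have "t * C \<le> \<bar>t * C\<bar>" by (rule abs_ge_self)
    also have "\<dots> = t * \<bar>C\<bar>" using t0 by (simp add: abs_mult)
    finally show ?thesis .
  qed
  ultimately have "A + t * C < 0" by linarith
  with assms[OF t0] show False by simp
qed

lemma first_order:
  fixes g :: "'a::real_vector \<Rightarrow> ereal" and Q l C :: "'a \<Rightarrow> real"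
  assumes cv: "convex_fun g" and nm: "\<And>x. g x \<noteq> -\<infinity>" and fin: "g y \<noteq> \<infinity>"
    and opt: "\<And>w. g y + ereal (Q y) \<le> g w + ereal (Q w)"
    and ex: "\<And>d t. Q (y + t *\<^sub>R d) = Q y + t * l d + t^2 * C d"
  shows "g w \<ge> g y + ereal (- l (w - y))"
proof (cases "g w = \<infinity>")
  case True then show ?thesis by simp
next
  case False
  obtain a where a: "g w = ereal a" using False nm[of w] by (cases "g w") auto
  obtain b where b: "g y = ereal b" using fin nm[of y] by (cases "g y") auto
  define d where "d = w - y"
  have key: "a - b + l d + t * C d \<ge> 0" if t: "0 < t" "t \<le> 1" for t
  proof -
    have eq: "(1-t) *\<^sub>R y + t *\<^sub>R w = y + t *\<^sub>R d" by (simp add: d_def algebra_simps)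
    have c1: "g (y + t *\<^sub>R d) \<le> ereal ((1-t)*b + t*a)"
      using convex_ineq[OF cv b a, of t] t eq by simp
    obtain c where c: "g (y + t *\<^sub>R d) = ereal c"
      using c1 nm[of "y + t *\<^sub>R d"] by (cases "g (y + t *\<^sub>R d)") auto
    have "b + Q y \<le> c + Q (y + t *\<^sub>R d)" using opt[of "y + t *\<^sub>R d"] b c by simp
    moreover have "c \<le> (1-t)*b + t*a" using c1 c by simp
    ultimately have "0 \<le> t * (a - b + l d) + t^2 * C d" using ex[of t d] by (simp add: algebra_simps)
    also have "\<dots> = t * (a - b + l d + t * C d)" by (simp add: algebra_simps power2_eq_square)
    finally show ?thesis using t by (simp add: zero_le_mult_iff)
  qed
  have "a - b + l d \<ge> 0" using small_t[of "a - b + l d" "C d"] key by simp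
  then show ?thesis using a b by (simp add: d_def)
qed

lemma subdiff_real:
  assumes "v \<in> subdiff f x" "\<And>z. f z \<noteq> -\<infinity>"
  shows "f x \<noteq> \<infinity>" "\<And>z. f z \<ge> f x + ereal (v \<bullet> (z - x))"
  using assms by (auto simp: subdiff_def)




lemma y_subgrad:
  fixes g :: "real^'p \<Rightarrow> ereal" and B :: "real^'p^'m" and H :: "real^'p^'p"
    and c a b :: "real^'m" and y1 y0 w :: "real^'p" and \<beta> :: real
  assumes cv: "convex_fun g" and nm: "\<And>z. g z \<noteq> -\<infinity>" and fin: "g y1 \<noteq> \<infinity>"
   and opt: "\<And>w. g y1 + ereal (- (c \<bullet> (B *v y1)) + \<beta> / 2 * norm (a + B *v y1 - b)^2 + 1/2 * qnorm2 H (y1 - y0))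
        \<le> g w + ereal (- (c \<bullet> (B *v w)) + \<beta> / 2 * norm (a + B *v w - b)^2 + 1/2 * qnorm2 H (w - y0))"
  shows "g w \<ge> g y1 + ereal ((c - \<beta> *\<^sub>R (a + B *v y1 - b)) \<bullet> (B *v (w - y1))
      - ((H *v (w - y1)) \<bullet> (y1 - y0) + (H *v (y1 - y0)) \<bullet> (w - y1)) / 2)"
proof -
  define Q where "Q = (\<lambda>w. - (c \<bullet> (B *v w)) + \<beta> / 2 * norm (a + B *v w - b)^2 + 1/2 * qnorm2 H (w - y0))"
  define r where "r = a + B *v y1 - b"
  define e where "e = y1 - y0"
  define l where "l = (\<lambda>d. - (c \<bullet> (B *v d)) + \<beta> * (r \<bullet> (B *v d)) + ((H *v d) \<bullet> e + (H *v e) \<bullet> d) / 2)"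
  define C where "C = (\<lambda>d. \<beta> / 2 * ((B *v d) \<bullet> (B *v d)) + ((H *v d) \<bullet> d) / 2)"
  have ex: "Q (y1 + t *\<^sub>R d) = Q y1 + t * l d + t^2 * C d" for t d
  proof -
    have a1: "a + B *v (y1 + t *\<^sub>R d) - b = r + t *\<^sub>R (B *v d)"
      by (simp add: r_def matrix_vector_right_distrib matrix_vector_mult_scaleR algebra_simps)
    have a2: "y1 + t *\<^sub>R d - y0 = e + t *\<^sub>R d" by (simp add: e_def algebra_simps)
    have a3: "a + B *v y1 - b = r" by (simp add: r_def)
    have n1: "norm (r + t *\<^sub>R (B *v d))^2 = r \<bullet> r + 2 * t * (r \<bullet> (B *v d)) + t^2 * ((B *v d) \<bullet> (B *v d))"
      unfolding power2_norm_eq_inner by (simp add: power2_norm_eq_inner inner_add_left inner_add_right inner_commute[of "B *v d" r]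
          algebra_simps power2_eq_square)
    have n2: "qnorm2 H (e + t *\<^sub>R d) = qnorm2 H e + t * ((H *v d) \<bullet> e + (H *v e) \<bullet> d) + t^2 * ((H *v d) \<bullet> d)"
      by (simp add: qnorm2_def matrix_vector_right_distrib matrix_vector_mult_scaleR inner_add_left inner_add_right
          algebra_simps power2_eq_square)
    have n3: "c \<bullet> (B *v (y1 + t *\<^sub>R d)) = c \<bullet> (B *v y1) + t * (c \<bullet> (B *v d))"
      by (simp add: matrix_vector_right_distrib matrix_vector_mult_scaleR inner_add_right)
    have "Q (y1 + t *\<^sub>R d) = - (c \<bullet> (B *v y1)) - t * (c \<bullet> (B *v d))
        + \<beta> / 2 * (r \<bullet> r + 2 * t * (r \<bullet> (B *v d)) + t^2 * ((B *v d) \<bullet> (B *v d)))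
        + 1/2 * (qnorm2 H e + t * ((H *v d) \<bullet> e + (H *v e) \<bullet> d) + t^2 * ((H *v d) \<bullet> d))"
      unfolding Q_def a1 a2 n1 n2 n3 by simp
    moreover have "Q y1 = - (c \<bullet> (B *v y1)) + \<beta> / 2 * (r \<bullet> r) + 1/2 * qnorm2 H e"
      unfolding Q_def a3 e_def by (simp add: power2_norm_eq_inner)
    ultimately show ?thesis unfolding l_def C_def by (simp add: algebra_simps add_divide_distrib)
  qed
  have opt': "\<And>w. g y1 + ereal (Q y1) \<le> g w + ereal (Q w)" using opt by (simp add: Q_def)
  have "g w \<ge> g y1 + ereal (- l (w - y1))"
    by (rule first_order[OF cv nm fin opt' ex])
  moreover have "- l (w - y1) = (c - \<beta> *\<^sub>R (a + B *v y1 - b)) \<bullet> (B *v (w - y1))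
      - ((H *v (w - y1)) \<bullet> (y1 - y0) + (H *v (y1 - y0)) \<bullet> (w - y1)) / 2"
    unfolding l_def r_def e_def by (simp add: inner_diff_left algebra_simps)
  ultimately show ?thesis by simp
qed

lemma Nf_scalar:
  fixes s \<beta> \<tau> ww wg gg :: real
  assumes "s \<noteq> 0" "\<beta> \<noteq> 0"
  shows "((s*(1-\<tau>) + \<tau>^2) * \<beta> / s) * ww - 2*(\<tau>/s)*wg + (1/(s*\<beta>))*gg
     = (1/(s*\<beta>))*(gg - 2*(\<tau>*\<beta>)*wg + (\<tau>*\<beta>)^2*ww) + (1-\<tau>)*\<beta>*ww"
  using assms by (simp add: field_simps power2_eq_square)

lemma Nf_alt:
  assumes "\<beta> > 0" "\<tau> + \<theta> > 0"
  shows "Nf \<beta> \<tau> \<theta> w g = (1 / ((\<tau>+\<theta>) * \<beta>)) * ((g - (\<tau>*\<beta>) *\<^sub>R w) \<bullet> (g - (\<tau>*\<beta>) *\<^sub>R w))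
     + (1 - \<tau>) * \<beta> * (w \<bullet> w)"
proof -
  have e: "(g - (\<tau>*\<beta>) *\<^sub>R w) \<bullet> (g - (\<tau>*\<beta>) *\<^sub>R w) = g \<bullet> g - 2 * (\<tau>*\<beta>) * (w \<bullet> g) + (\<tau>*\<beta>)^2 * (w \<bullet> w)"
    by (simp add: inner_diff_left inner_diff_right inner_commute[of g w] algebra_simps power2_eq_square)
  have s: "\<tau> + \<theta> \<noteq> 0" "\<beta> \<noteq> 0" using assms by auto
  have c: "\<tau> - \<tau> * \<theta> + \<theta> = (\<tau>+\<theta>)*(1-\<tau>) + \<tau>^2" by (simp add: algebra_simps power2_eq_square)
  show ?thesis unfolding Nf_def e c
    by (rule Nf_scalar[OF s])
qed

lemma Nf_nonneg:
  assumes "\<beta> > 0" "\<tau> + \<theta> > 0" "\<tau> < 1"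
  shows "Nf \<beta> \<tau> \<theta> w g \<ge> 0"
  unfolding Nf_alt[OF assms(1,2)] using assms by (intro add_nonneg_nonneg mult_nonneg_nonneg) auto

lemma Mnorm2_split:
  "Mnorm2 G H B \<beta> \<tau> \<theta> (X, Y, Z) = qnorm2 G X + qnorm2 H Y + Nf \<beta> \<tau> \<theta> (B *v Y) Z"
  unfolding Mnorm2_def Nf_def by simp

lemma S_bounds:
  fixes P q :: "real^'m"
  assumes b: "\<beta> > 0" and s0: "0 \<le> \<sigma>" and r: "-1 < \<tau>" "\<tau> < 1 - \<sigma>" "\<tau> + \<theta> > 0"
    "(1 - \<tau>^2) * (2 - \<tau> - \<theta> - \<sigma>) - (1 - \<theta>)^2 * (1 - \<tau> - \<sigma>) > 0"
  defines "S \<equiv> ((3 - 3*\<tau> - 2*\<sigma>) * \<beta>^2 * (P \<bullet> P) + (4 - \<tau> - \<theta> - 2*\<sigma>) * (q \<bullet> q)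
                + 4 * (1 - \<tau> - \<sigma>) * \<beta> * (P \<bullet> q)) / \<beta>"
  shows "S \<ge> 0" "S \<ge> - 2 * vartheta \<tau> \<theta> \<sigma> * (P \<bullet> q)"
proof -
  define X where "X = 3 - 3*\<tau> - 2*\<sigma>"
  define Y where "Y = 4 - \<tau> - \<theta> - 2*\<sigma>"
  define a where "a = 1 - \<tau> - \<sigma>"
  have a0: "a > 0" using r by (simp add: a_def)
  have X0: "X > 0" using r s0 by (simp add: X_def)
  have XY: "4 * a^2 \<le> X * Y" using XY_ge[OF s0 r] by (simp add: a_def X_def Y_def)
  have Y0: "Y > 0"
  proof (rule ccontr)
    assume "\<not> Y > 0" then have "X * Y \<le> 0" using X0 by (simp add: mult_nonpos_nonneg mult_le_0_iff)
    moreover have "4 * a^2 > 0" using a0 by simp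
    ultimately show False using XY by linarith
  qed
  have sq: "2 * a \<le> sqrt (X * Y)"
    using XY a0 by (metis real_le_rsqrt power_mult_distrib mult_nonneg_nonneg less_imp_le
        zero_le_numeral power2_eq_square[of 2] numeral_times_numeral semiring_norm(12) semiring_norm(13))
  define V where "V = (sqrt X * \<beta>) *\<^sub>R P + sqrt Y *\<^sub>R q"
  have V: "0 \<le> V \<bullet> V" by simp
  have sx: "sqrt X * (sqrt X * z) = X * z" "sqrt Y * (sqrt Y * z) = Y * z" for z
    using X0 Y0 by (simp_all add: mult.assoc[symmetric])
  have Ve: "V \<bullet> V = X * \<beta>^2 * (P \<bullet> P) + Y * (q \<bullet> q) + 2 * sqrt (X * Y) * \<beta> * (P \<bullet> q)"
    using X0 Y0 unfolding V_def
    by (simp add: inner_add_left inner_add_right inner_commute[of q P] real_sqrt_mult algebra_simps power2_eq_square sx)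
  have num: "S * \<beta> = X * \<beta>^2 * (P \<bullet> P) + Y * (q \<bullet> q) + 4 * a * \<beta> * (P \<bullet> q)"
    using b by (simp add: S_def X_def Y_def a_def)
  have th: "vartheta \<tau> \<theta> \<sigma> = sqrt (X * Y) - 2 * a" by (simp add: vartheta_def X_def Y_def a_def)
  have pp: "P \<bullet> P \<ge> 0" "q \<bullet> q \<ge> 0" by auto
  have th2: "- 2 * vartheta \<tau> \<theta> \<sigma> * (P \<bullet> q) * \<beta> = - (2 * sqrt (X * Y) * \<beta> * (P \<bullet> q)) + 4 * a * \<beta> * (P \<bullet> q)"
    by (simp add: th algebra_simps)
  have "S * \<beta> \<ge> - 2 * vartheta \<tau> \<theta> \<sigma> * (P \<bullet> q) * \<beta>"
    using V Ve num th2 by linarith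
  then show "S \<ge> - 2 * vartheta \<tau> \<theta> \<sigma> * (P \<bullet> q)" using b
    by (metis mult_le_cancel_right_pos)
  have "S * \<beta> \<ge> 0"
  proof (cases "P \<bullet> q \<ge> 0")
    case True
    then show ?thesis unfolding num using a0 b X0 Y0 pp by simp
  next
    case False
    have "4 * a * \<beta> * (P \<bullet> q) \<ge> 2 * sqrt (X * Y) * \<beta> * (P \<bullet> q)"
    proof -
      have "(2 * sqrt (X * Y)) * (\<beta> * (P \<bullet> q)) \<le> (4 * a) * (\<beta> * (P \<bullet> q))"
        using sq False b by (intro mult_right_mono_neg) (auto simp: mult_pos_neg mult_nonneg_nonpos)
      then show ?thesis by (simp add: algebra_simps)
    qed
    then show ?thesis using V Ve num by linarith
  qed
  then show "S \<ge> 0" using b by (simp add: zero_le_mult_iff)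
qed

lemma pos_def_inv:
  fixes G :: "real^'n^'n"
  assumes "pos_def G"
  shows "G *v (matrix_inv G *v u) = u"
proof -
  have "\<forall>x. G *v x = 0 \<longrightarrow> x = 0"
    using assms unfolding pos_def_def qnorm2_def by force
  then have "\<exists>B. B ** G = mat 1" by (simp add: matrix_left_invertible_ker)
  then have "invertible G" by (simp add: invertible_left_inverse)
  then have "G ** matrix_inv G = mat 1"
    unfolding matrix_inv_def invertible_def by (rule someI_ex[where P="\<lambda>A'. G ** A' = mat 1 \<and> A' ** G = mat 1", THEN conjunct1])
  then show ?thesis by (metis matrix_vector_mul_assoc matrix_vector_mul_lid)
qed

lemma qG_nonneg: "pos_def G \<Longrightarrow> qnorm2 G z \<ge> 0"
  unfolding pos_def_def by (cases "z = 0") (auto simp: qnorm2_def intro: less_imp_le)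



lemma lin_aux: "(h::real)/2 - h'/2 \<le> a + b - c \<Longrightarrow> 2*c - 2*b + h - h' \<le> 2*a" by linarith

lemma final_comb:
  fixes qX0 qA qXt qXtw qw mx qY qB h hh N0 N1 mm S0 E shX :: real
  assumes "4*qX0 = qA + 2*(qXt - qXtw) + qw + 4*mx"
    "4*qY = qB + 3*h + 2*hh"
    "4*N0 - N1 - 4*mm = S0"
    "mx + mm + hh/2 \<ge> 0"
    "qXtw \<le> E + shX" "shX \<le> qXt"
    "qA \<ge> 0" "qw \<ge> 0" "qB \<ge> 0" "N1 \<ge> 0"
  shows "4*(qX0 + qY + N0) \<ge> 3*h + (S0 - 2*E)"
proof -
  have "4*(qX0 + qY + N0) = 4*qX0 + 4*qY + 4*N0" by simp
  also have "\<dots> = (qA + qw + qB + N1) + 2*(qXt - qXtw) + 3*h + S0 + 4*(mx + mm + hh/2)"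
    using assms(1,2,3) by simp
  also have "\<dots> \<ge> 2*(qXt - qXtw) + 3*h + S0" using assms(4,7-10) by simp
  finally have "4*(qX0 + qY + N0) \<ge> 2*(qXt - qXtw) + 3*h + S0" .
  moreover have "qXt - qXtw \<ge> - E" using assms(5,6) by simp
  ultimately show ?thesis by simp
qed

lemma mon_comb:
  fixes mx A1 A2 A3 hh mm :: real
  shows "mx - (A1 - A2) \<ge> 0 \<Longrightarrow> A3 - hh/2 \<le> 0 \<Longrightarrow> mm = -A1 + A2 - A3 \<Longrightarrow> mx + mm + hh/2 \<ge> 0"
  by linarith

lemma concl_comb:
  fixes D h S v pq :: real
  assumes "4*D \<ge> 3*h + S" "S \<ge> 0" "S \<ge> - 2 * v * pq" "h \<ge> 0"
  shows "D \<ge> h/4 \<and> D \<ge> - v * pq / 2"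
proof -
  define t where "t = v * pq"
  have a: "S \<ge> -2*t" using assms(3) by (simp add: t_def)
  have "D \<ge> -t/2" using a assms(1,2,4) by linarith
  moreover have "- v * pq / 2 = -t/2" by (simp add: t_def)
  moreover have "D \<ge> h/4" using assms by linarith
  ultimately show ?thesis by simp
qed

lemma end_comb:
  fixes r h v pq :: real
  assumes "r \<ge> h/4" "r \<ge> - v * pq / 2"
  shows "min (2 * v * pq) (- h) \<ge> -4 * r"
proof -
  define t where "t = v * pq"
  have a: "r \<ge> -t/2" using assms(2) by (simp add: t_def)
  have "min (2 * t) (- h) \<ge> -4 * r" using a assms(1) by simp
  then show ?thesis by (simp add: t_def mult.assoc)
qed

lemma S_id:
  fixes \<beta> \<tau> \<theta> \<sigma> pp pq qq :: real
  assumes "\<beta> > 0"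
  shows "((3-3*\<tau>)*\<beta>^2*pp + (4-\<tau>-\<theta>)*qq + 4*(1-\<tau>)*\<beta>*pq) / \<beta> - 2*((\<sigma>/\<beta>)*(qq + 2*\<beta>*pq + \<beta>^2*pp))
    = ((3 - 3*\<tau> - 2*\<sigma>) * \<beta>^2 * pp + (4 - \<tau> - \<theta> - 2*\<sigma>) * qq + 4 * (1 - \<tau> - \<sigma>) * \<beta> * pq) / \<beta>"
  using assms by (simp add: field_simps power2_eq_square)

lemma tA: "(transpose A *v g) \<bullet> z = g \<bullet> ((A::real^'n^'m) *v z)"
  by (simp add: dot_lmul_matrix)

theorem lemma2p8:
  fixes f :: "real^'n \<Rightarrow> ereal" and g :: "real^'p \<Rightarrow> ereal"
    and A :: "real^'n^'m" and B :: "real^'p^'m" and b :: "real^'m"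
    and G :: "real^'n^'n" and H :: "real^'p^'p"
    and \<beta> \<sigma>t \<sigma>h \<tau> \<theta> :: real
    and x :: "nat \<Rightarrow> real^'n" and y :: "nat \<Rightarrow> real^'p" and \<gamma> :: "nat \<Rightarrow> real^'m"
    and xt :: "nat \<Rightarrow> real^'n" and u :: "nat \<Rightarrow> real^'n" and \<gamma>t :: "nat \<Rightarrow> real^'m"
    and \<gamma>h :: "nat \<Rightarrow> real^'m"
    and p q :: "nat \<Rightarrow> real^'m"
  assumes f_pcc: "proper_fun f" "convex_fun f" "closed_fun f"
    and g_pcc: "proper_fun g" "convex_fun g" "closed_fun g"
    and sol_exists: "T_zeros f g A B b \<noteq> {}"
    and \<beta>_pos: "\<beta> > 0"
    and \<sigma>t: "0 \<le> \<sigma>t" "\<sigma>t < 1" and \<sigma>h: "0 \<le> \<sigma>h" "\<sigma>h < 1"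
    and G_pd: "pos_def G" and H_psd: "pos_semidef H"
    and region: "(\<tau>, \<theta>) \<in> admissible_region \<sigma>t"
    and \<gamma>t_def: "\<And>k. k \<ge> 1 \<Longrightarrow> \<gamma>t k = \<gamma> (k - 1) - \<beta> *\<^sub>R (A *v xt k + B *v y (k - 1) - b)"
    and u_sub: "\<And>k. k \<ge> 1 \<Longrightarrow> u k + transpose A *v \<gamma>t k \<in> subdiff f (xt k)"
    and err: "\<And>k. k \<ge> 1 \<Longrightarrow>
       qnorm2 G (xt k - x (k - 1) + matrix_inv G *v u k)
         \<le> (\<sigma>t / \<beta>) * norm (\<gamma>t k - \<gamma> (k - 1))^2 + \<sigma>h * qnorm2 G (xt k - x (k - 1))"
    and \<gamma>h_def: "\<And>k. k \<ge> 1 \<Longrightarrow> \<gamma>h k = \<gamma> (k - 1) - (\<tau> * \<beta>) *\<^sub>R (A *v xt k + B *v y (k - 1) - b)"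
    and y_opt: "\<And>k w. k \<ge> 1 \<Longrightarrow>
       g (y k) + ereal (- (\<gamma>h k \<bullet> (B *v y k)) + \<beta> / 2 * norm (A *v xt k + B *v y k - b)^2
                         + 1/2 * qnorm2 H (y k - y (k - 1)))
       \<le> g w + ereal (- (\<gamma>h k \<bullet> (B *v w)) + \<beta> / 2 * norm (A *v xt k + B *v w - b)^2
                         + 1/2 * qnorm2 H (w - y (k - 1)))"
    and x_def: "\<And>k. k \<ge> 1 \<Longrightarrow> x k = x (k - 1) - matrix_inv G *v u k"
    and \<gamma>_def: "\<And>k. k \<ge> 1 \<Longrightarrow> \<gamma> k = \<gamma>h k - (\<theta> * \<beta>) *\<^sub>R (A *v xt k + B *v y k - b)"
    and p_def: "\<And>k. k \<ge> 1 \<Longrightarrow> p k = B *v (y k - y (k - 1))"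
    and q_def: "\<And>k. k \<ge> 1 \<Longrightarrow> q k = - \<beta> *\<^sub>R (A *v xt k + B *v y k - b)"
  shows "ereal (min (2 * vartheta \<tau> \<theta> \<sigma>t * (p 1 \<bullet> q 1)) (- qnorm2 H (y 1 - y 0)))
           \<ge> - 4 * d0 f g A B b G H \<beta> \<tau> \<theta> (x 0, y 0, \<gamma> 0)
       \<and> (\<forall>k\<ge>2.
           2 * (1 + \<tau>) * (p k \<bullet> q k) \<ge> 2 * (1 - \<theta>) * (p k \<bullet> q (k - 1)) - 2 * \<tau> * \<beta> * norm (p k)^2
             + qnorm2 H (y k - y (k - 1)) - qnorm2 H (y (k - 1) - y (k - 2)))"
proof -
  have gnm: "\<And>z. g z \<noteq> -\<infinity>" using g_pcc(1) by (simp add: proper_fun_def)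
  have fnm: "\<And>z. f z \<noteq> -\<infinity>" using f_pcc(1) by (simp add: proper_fun_def)
  obtain w0 where w0: "g w0 \<noteq> \<infinity>" using g_pcc(1) by (auto simp: proper_fun_def)
  have gfin: "g (y k) \<noteq> \<infinity>" if k: "k \<ge> 1" for k
  proof
    assume inf: "g (y k) = \<infinity>"
    obtain r0 where "g w0 = ereal r0" using w0 gnm[of w0] by (cases "g w0") auto
    then show False using y_opt[OF k, of w0] inf by simp
  qed
  have sg: "g w \<ge> g (y k) + ereal ((\<gamma>h k + q k) \<bullet> (B *v (w - y k))
        - ((H *v (w - y k)) \<bullet> (y k - y (k-1)) + (H *v (y k - y (k-1))) \<bullet> (w - y k)) / 2)"
    if k: "k \<ge> 1" for k w
  proof -
    have "\<gamma>h k + q k = \<gamma>h k - \<beta> *\<^sub>R (A *v xt k + B *v y k - b)" using q_def[OF k] by simp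
    then show ?thesis using y_subgrad[OF g_pcc(2) gnm gfin[OF k] y_opt[OF k], of w] by simp
  qed
  have Hsym: "sym_mat H" using H_psd by (simp add: pos_semidef_def)
  have Gsym: "sym_mat G" using G_pd by (simp add: pos_def_def)
  have Hpsd: "\<And>z. qnorm2 H z \<ge> 0" using H_psd by (simp add: pos_semidef_def)
  have Gpsd: "\<And>z. qnorm2 G z \<ge> 0" using G_pd by (rule qG_nonneg)
  have reg: "-1 < \<tau>" "\<tau> < 1 - \<sigma>t" "\<tau> + \<theta> > 0"
    "(1 - \<tau>^2) * (2 - \<tau> - \<theta> - \<sigma>t) - (1 - \<theta>)^2 * (1 - \<tau> - \<sigma>t) > 0"
    using region by (auto simp: admissible_region_def)
  have pb: "2 * (1 + \<tau>) * (p k \<bullet> q k) \<ge> 2 * (1 - \<theta>) * (p k \<bullet> q (k - 1)) - 2 * \<tau> * \<beta> * norm (p k)^2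
             + qnorm2 H (y k - y (k - 1)) - qnorm2 H (y (k - 1) - y (k - 2))" if k: "k \<ge> 2" for k
  proof -
    define j where "j = k - 1"
    have j1: "j \<ge> 1" and k1: "k \<ge> 1" and kj: "k - 1 = j" and kj2: "k - 2 = j - 1" using k by (auto simp: j_def)
    define e where "e = y k - y j"
    define e' where "e' = y j - y (j - 1)"
    have s1: "g (y j) \<ge> g (y k) + ereal ((\<gamma>h k + q k) \<bullet> (B *v (y j - y k))
        - ((H *v (y j - y k)) \<bullet> (y k - y j) + (H *v (y k - y j)) \<bullet> (y j - y k)) / 2)"
      using sg[OF k1, of "y j"] kj by simp
    have s2: "g (y k) \<ge> g (y j) + ereal ((\<gamma>h j + q j) \<bullet> (B *v (y k - y j))
        - ((H *v (y k - y j)) \<bullet> (y j - y (j-1)) + (H *v (y j - y (j-1))) \<bullet> (y k - y j)) / 2)"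
      using sg[OF j1, of "y k"] by simp
    have c: "((\<gamma>h k + q k) \<bullet> (B *v (y j - y k))
        - ((H *v (y j - y k)) \<bullet> (y k - y j) + (H *v (y k - y j)) \<bullet> (y j - y k)) / 2)
        + ((\<gamma>h j + q j) \<bullet> (B *v (y k - y j))
        - ((H *v (y k - y j)) \<bullet> (y j - y (j-1)) + (H *v (y j - y (j-1))) \<bullet> (y k - y j)) / 2) \<le> 0"
      by (rule combine2[where g=g and a="y k" and b="y j", OF gnm gfin[OF k1] gfin[OF j1] s1 s2])
    have pk: "p k = B *v e" using p_def[OF k1] kj by (simp add: e_def)
    have Bm: "B *v (y j - y k) = - p k" using pk by (simp add: e_def matrix_vector_mult_diff_distrib)
    have Bp: "B *v (y k - y j) = p k" using pk by (simp add: e_def)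
    have Hm: "H *v (y j - y k) = - (H *v e)" by (simp add: e_def matrix_vector_mult_diff_distrib)
    have c2: "- ((\<gamma>h k + q k) \<bullet> p k) + qnorm2 H e + (\<gamma>h j + q j) \<bullet> p k
        - ((H *v e) \<bullet> e' + (H *v e') \<bullet> e) / 2 \<le> 0"
    proof -
      have mye: "y j - y k = - e" by (simp add: e_def)
      show ?thesis using c unfolding Bm Bp Hm unfolding e_def[symmetric] e'_def[symmetric] mye
        by (simp add: qnorm2_def pk[symmetric] field_simps)
    qed
    have rel: "\<gamma>h k + q k - (\<gamma>h j + q j) = (1 + \<tau>) *\<^sub>R q k + (\<tau> * \<beta>) *\<^sub>R p k - (1 - \<theta>) *\<^sub>R q j"
    proof -
      define rk where "rk = A *v xt k + B *v y k - b"
      define rj where "rj = A *v xt j + B *v y j - b"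
      have pk2: "p k = B *v y k - B *v y j" using pk by (simp add: e_def matrix_vector_mult_diff_distrib)
      have h1: "A *v xt k + B *v y j - b = rk - p k" by (simp add: rk_def pk2)
      have e1: "\<gamma>h k = \<gamma>h j - (\<theta> * \<beta>) *\<^sub>R rj - (\<tau> * \<beta>) *\<^sub>R (rk - p k)"
        using \<gamma>h_def[OF k1] \<gamma>_def[OF j1] kj h1 by (simp add: rj_def)
      have e2: "q k = - \<beta> *\<^sub>R rk" "q j = - \<beta> *\<^sub>R rj" using q_def[OF k1] q_def[OF j1] by (simp_all add: rk_def rj_def)
      show ?thesis unfolding e1 e2
        by (simp add: algebra_simps scaleR_diff_right scaleR_add_right scaleR_diff_left scaleR_add_left)
    qed
    have ip: "(\<gamma>h k + q k) \<bullet> p k - (\<gamma>h j + q j) \<bullet> p k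
        = (1 + \<tau>) * (q k \<bullet> p k) + (\<tau> * \<beta>) * (p k \<bullet> p k) - (1 - \<theta>) * (q j \<bullet> p k)"
    proof -
      have "(\<gamma>h k + q k) \<bullet> p k - (\<gamma>h j + q j) \<bullet> p k = (\<gamma>h k + q k - (\<gamma>h j + q j)) \<bullet> p k"
        by (simp add: inner_diff_left)
      also have "\<dots> = (1 + \<tau>) * (q k \<bullet> p k) + (\<tau> * \<beta>) * (p k \<bullet> p k) - (1 - \<theta>) * (q j \<bullet> p k)"
        unfolding rel by (simp add: inner_diff_left inner_add_left)
      finally show ?thesis .
    qed
    have psd: "qnorm2 H (e - e') \<ge> 0" by (rule Hpsd)
    have psd2: "qnorm2 H (e - e') = qnorm2 H e - (H *v e) \<bullet> e' - (H *v e') \<bullet> e + qnorm2 H e'"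
      by (simp add: qnorm2_def matrix_vector_mult_diff_distrib inner_diff_left inner_diff_right)
    have np: "norm (p k)^2 = p k \<bullet> p k" by (simp add: power2_norm_eq_inner)
    have yy: "y k - y (k - 1) = e" "y (k - 1) - y (k - 2) = e'" using kj kj2 by (simp_all add: e_def e'_def)
    have ip2: "(\<gamma>h k + q k) \<bullet> p k - (\<gamma>h j + q j) \<bullet> p k
        = (1 + \<tau>) * (p k \<bullet> q k) + (\<tau> * \<beta>) * (p k \<bullet> p k) - (1 - \<theta>) * (p k \<bullet> q (k - 1))"
      using ip kj by (simp add: inner_commute)
    have main: "(1 + \<tau>) * (p k \<bullet> q k) + (\<tau> * \<beta>) * (p k \<bullet> p k) - (1 - \<theta>) * (p k \<bullet> q (k - 1))
        \<ge> qnorm2 H e / 2 - qnorm2 H e' / 2"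
    proof -
      have C1: "(H *v e) \<bullet> e' + (H *v e') \<bullet> e \<le> qnorm2 H e + qnorm2 H e'" using psd psd2 by linarith
      have C2: "2 * ((\<gamma>h k + q k) \<bullet> p k - (\<gamma>h j + q j) \<bullet> p k) \<ge> 2 * qnorm2 H e - ((H *v e) \<bullet> e' + (H *v e') \<bullet> e)"
        using c2 by (simp add: field_simps)
      have "2 * ((\<gamma>h k + q k) \<bullet> p k - (\<gamma>h j + q j) \<bullet> p k) \<ge> qnorm2 H e - qnorm2 H e'"
        using C1 C2 by linarith
      then show ?thesis unfolding ip2[symmetric] by simp
    qed
    have m1: "2 * (1 + \<tau>) * (p k \<bullet> q k) = 2 * ((1 + \<tau>) * (p k \<bullet> q k))"
      "2 * (1 - \<theta>) * (p k \<bullet> q (k - 1)) = 2 * ((1 - \<theta>) * (p k \<bullet> q (k - 1)))"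
      "2 * \<tau> * \<beta> * (p k \<bullet> p k) = 2 * ((\<tau> * \<beta>) * (p k \<bullet> p k))" by simp_all
    show ?thesis unfolding np yy m1 by (rule lin_aux[OF main])
  qed
  have one: "(1::nat) \<ge> 1" by simp
  have pa: "Mnorm2 G H B \<beta> \<tau> \<theta> (zs - (x 0, y 0, \<gamma> 0)) \<ge> qnorm2 H (y 1 - y 0) / 4
          \<and> Mnorm2 G H B \<beta> \<tau> \<theta> (zs - (x 0, y 0, \<gamma> 0)) \<ge> - vartheta \<tau> \<theta> \<sigma>t * (p 1 \<bullet> q 1) / 2"
    if zs: "zs \<in> T_zeros f g A B b" for zs
  proof -
    obtain xs ys gs where zs_eq: "zs = (xs, ys, gs)" by (cases zs) auto
    have tz1: "transpose A *v gs \<in> subdiff f xs" and tz2: "transpose B *v gs \<in> subdiff g ys"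
      and tz3: "A *v xs + B *v ys - b = 0" using zs unfolding zs_eq T_zeros_def by auto
    define w where "w = matrix_inv G *v u 1"
    define X0 where "X0 = xs - x 0"
    define Xt where "Xt = xt 1 - x 0"
    define Y where "Y = ys - y 0"
    define e where "e = y 1 - y 0"
    define P where "P = p 1"
    define qq where "qq = q 1"
    define Y0m where "Y0m = B *v Y"
    define G0 where "G0 = gs - \<gamma> 0"
    define r1 where "r1 = A *v xt 1 + B *v y 1 - b"
    have uG: "u 1 = G *v w" using pos_def_inv[OF G_pd] by (simp add: w_def)
    have Pe: "P = B *v e" using p_def[OF one] by (simp add: P_def e_def)
    have Pe2: "P = B *v y 1 - B *v y 0" using Pe by (simp add: e_def matrix_vector_mult_diff_distrib)
    have qr: "qq = - \<beta> *\<^sub>R r1" using q_def[OF one] by (simp add: qq_def r1_def)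
    have r1q: "(1/\<beta>) *\<^sub>R qq = - r1" using qr \<beta>_pos by simp
    have \<gamma>t1: "\<gamma>t 1 = \<gamma> 0 + qq + \<beta> *\<^sub>R P"
    proof -
      have h: "A *v xt 1 + B *v y 0 - b = r1 - P" by (simp add: r1_def Pe2)
      have "\<gamma>t 1 = \<gamma> 0 - \<beta> *\<^sub>R (r1 - P)" using \<gamma>t_def[OF one] h by simp
      then show ?thesis unfolding qr by (simp add: algebra_simps)
    qed
    have \<gamma>h1: "\<gamma>h 1 = \<gamma> 0 + \<tau> *\<^sub>R qq + (\<tau> * \<beta>) *\<^sub>R P"
    proof -
      have h: "A *v xt 1 + B *v y 0 - b = r1 - P" by (simp add: r1_def Pe2)
      have "\<gamma>h 1 = \<gamma> 0 - (\<tau> * \<beta>) *\<^sub>R (r1 - P)" using \<gamma>h_def[OF one] h by simp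
      then show ?thesis unfolding qr by (simp add: algebra_simps)
    qed
    have f1a: "f xs \<ge> f (xt 1) + ereal ((u 1 + transpose A *v \<gamma>t 1) \<bullet> (xs - xt 1))"
      using subdiff_real(2)[OF u_sub[OF one] fnm] .
    have f1b: "f (xt 1) \<ge> f xs + ereal ((transpose A *v gs) \<bullet> (xt 1 - xs))"
      using subdiff_real(2)[OF tz1 fnm] .
    have F1: "(u 1 + transpose A *v \<gamma>t 1) \<bullet> (xs - xt 1) + (transpose A *v gs) \<bullet> (xt 1 - xs) \<le> 0"
      by (rule combine2[where g=f and a="xt 1" and b=xs, OF fnm subdiff_real(1)[OF u_sub[OF one] fnm]
            subdiff_real(1)[OF tz1 fnm] f1a f1b])
    have F1a: "u 1 \<bullet> (xs - xt 1) + (\<gamma>t 1 - gs) \<bullet> (A *v (xs - xt 1)) \<le> 0"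
    proof -
      have i1: "(transpose A *v gs) \<bullet> (xt 1 - xs) = - (gs \<bullet> (A *v (xs - xt 1)))"
        by (simp add: dot_lmul_matrix matrix_vector_mult_diff_distrib inner_diff_right)
      have i2: "(u 1 + transpose A *v \<gamma>t 1) \<bullet> (xs - xt 1) = u 1 \<bullet> (xs - xt 1) + \<gamma>t 1 \<bullet> (A *v (xs - xt 1))"
        by (simp add: inner_add_left dot_lmul_matrix)
      show ?thesis using F1 unfolding i1 i2 by (simp add: inner_diff_left)
    qed
    have AX: "A *v (xs - xt 1) = (1/\<beta>) *\<^sub>R qq - (Y0m - P)"
    proof -
      have Axs: "A *v xs = b - B *v ys" using tz3 by (simp add: algebra_simps)
      have Axt: "A *v xt 1 = r1 + b - B *v y 1" by (simp add: r1_def)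
      show ?thesis unfolding r1q
        by (simp add: matrix_vector_mult_diff_distrib Axs Axt Y0m_def Y_def Pe2 r1_def algebra_simps)
    qed
    have F1': "(G *v w) \<bullet> (Xt - X0) - (qq + \<beta> *\<^sub>R P - G0) \<bullet> ((1/\<beta>) *\<^sub>R qq - (Y0m - P)) \<ge> 0"
    proof -
      have a1: "xs - xt 1 = - (Xt - X0)" by (simp add: X0_def Xt_def)
      have a2: "\<gamma>t 1 - gs = qq + \<beta> *\<^sub>R P - G0" unfolding \<gamma>t1 G0_def by (simp add: algebra_simps)
      have "(G *v w) \<bullet> (- (Xt - X0)) + (qq + \<beta> *\<^sub>R P - G0) \<bullet> ((1/\<beta>) *\<^sub>R qq - (Y0m - P)) \<le> 0"
        using F1a unfolding uG AX a2 by (simp only: a1)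
      then show ?thesis by (simp only: inner_minus_right)
    qed
    have g2a: "g ys \<ge> g (y 1) + ereal ((\<gamma>h 1 + q 1) \<bullet> (B *v (ys - y 1))
        - ((H *v (ys - y 1)) \<bullet> (y 1 - y 0) + (H *v (y 1 - y 0)) \<bullet> (ys - y 1)) / 2)"
      using sg[OF one, of ys] by simp
    have g2b: "g (y 1) \<ge> g ys + ereal ((transpose B *v gs) \<bullet> (y 1 - ys))"
      using subdiff_real(2)[OF tz2 gnm] .
    have F2: "((\<gamma>h 1 + q 1) \<bullet> (B *v (ys - y 1))
        - ((H *v (ys - y 1)) \<bullet> (y 1 - y 0) + (H *v (y 1 - y 0)) \<bullet> (ys - y 1)) / 2)
        + (transpose B *v gs) \<bullet> (y 1 - ys) \<le> 0"
      by (rule combine2[where g=g and a="y 1" and b=ys, OF gnm gfin[OF one] subdiff_real(1)[OF tz2 gnm] g2a g2b])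
    define hh where "hh = (H *v (Y - e)) \<bullet> e + (H *v e) \<bullet> (Y - e)"
    have F2': "((1 + \<tau>) *\<^sub>R qq + (\<tau> * \<beta>) *\<^sub>R P - G0) \<bullet> (Y0m - P) - hh / 2 \<le> 0"
    proof -
      have b1: "ys - y 1 = Y - e" by (simp add: Y_def e_def)
      have b2: "y 1 - y 0 = e" by (simp add: e_def)
      have BY: "B *v (Y - e) = Y0m - P" by (simp add: Y0m_def Pe matrix_vector_mult_diff_distrib)
      have b3: "(transpose B *v gs) \<bullet> (y 1 - ys) = - (gs \<bullet> (Y0m - P))"
      proof -
        have "y 1 - ys = - (Y - e)" by (simp add: Y_def e_def)
        then show ?thesis by (simp add: dot_lmul_matrix BY[symmetric] matrix_vector_mult_diff_distrib inner_diff_right)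
      qed
      have b4: "\<gamma>h 1 + q 1 - gs = (1 + \<tau>) *\<^sub>R qq + (\<tau> * \<beta>) *\<^sub>R P - G0"
        unfolding \<gamma>h1 qq_def[symmetric] G0_def by (simp add: algebra_simps)
      have "(\<gamma>h 1 + q 1) \<bullet> (Y0m - P) - hh / 2 - gs \<bullet> (Y0m - P) \<le> 0"
        using F2 unfolding b1 b2 BY b3 hh_def by simp
      then have "(\<gamma>h 1 + q 1 - gs) \<bullet> (Y0m - P) - hh / 2 \<le> 0" by (simp add: inner_diff_left)
      then show ?thesis unfolding b4 .
    qed
    define mm where "mm = (G0 - qq - \<beta> *\<^sub>R P) \<bullet> qq / \<beta> + ((- \<tau>) *\<^sub>R qq + ((1-\<tau>)*\<beta>) *\<^sub>R P) \<bullet> (Y0m - P)"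
    have MON: "(G *v w) \<bullet> (Xt - X0) + mm + hh/2 \<ge> 0"
    proof -
      define V1 where "V1 = qq + \<beta> *\<^sub>R P - G0"
      define V2 where "V2 = (1 + \<tau>) *\<^sub>R qq + (\<tau> * \<beta>) *\<^sub>R P - G0"
      have j1: "V1 \<bullet> ((1/\<beta>) *\<^sub>R qq - (Y0m - P)) = (V1 \<bullet> qq) / \<beta> - V1 \<bullet> (Y0m - P)"
        by (simp add: inner_diff_right)
      have j2: "G0 - qq - \<beta> *\<^sub>R P = - V1" by (simp add: V1_def)
      have j3: "(- \<tau>) *\<^sub>R qq + ((1-\<tau>)*\<beta>) *\<^sub>R P = V1 - V2" by (simp add: V1_def V2_def algebra_simps)
      have mm2: "mm = - ((V1 \<bullet> qq) / \<beta>) + V1 \<bullet> (Y0m - P) - V2 \<bullet> (Y0m - P)"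
        unfolding mm_def j2 j3 by (simp add: inner_diff_left)
      show ?thesis
        by (rule mon_comb[OF F1'[folded V1_def, unfolded j1] F2'[folded V2_def] mm2])
    qed
    have Dsplit: "Mnorm2 G H B \<beta> \<tau> \<theta> (zs - (x 0, y 0, \<gamma> 0)) = qnorm2 G X0 + qnorm2 H Y + Nf \<beta> \<tau> \<theta> Y0m G0"
      unfolding zs_eq by (simp add: Mnorm2_split X0_def Y_def G0_def Y0m_def)
    note xp = xpart[OF Gsym, of X0 w Xt]
    note hp = hpart[OF Hsym, of Y e]
    note mp = mpart[OF \<beta>_pos reg(3), of Y0m G0 P qq]
    have err1: "qnorm2 G (Xt + w) \<le> (\<sigma>t / \<beta>) * norm (\<gamma>t 1 - \<gamma> 0)^2 + \<sigma>h * qnorm2 G Xt"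
      using err[OF one] by (simp add: Xt_def w_def)
    have tau1: "\<tau> < 1" using reg(2) \<sigma>t(1) by linarith
    have shx: "\<sigma>h * qnorm2 G Xt \<le> qnorm2 G Xt" using \<sigma>h Gpsd[of Xt] by (intro mult_left_le_one_le) auto
    have N1: "Nf \<beta> \<tau> \<theta> (2 *\<^sub>R Y0m - P) (2 *\<^sub>R G0 - ((\<tau>+\<theta>) *\<^sub>R qq + (\<tau>*\<beta>) *\<^sub>R P)) \<ge> 0"
      by (rule Nf_nonneg[OF \<beta>_pos reg(3) tau1])
    note FC = final_comb[OF xp hp mp[unfolded mm_def[symmetric]] MON[unfolded hh_def] err1 shx Gpsd Gpsd Hpsd N1]
    have NQ: "norm (\<gamma>t 1 - \<gamma> 0)^2 = qq \<bullet> qq + 2*\<beta>*(P \<bullet> qq) + \<beta>^2*(P \<bullet> P)"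
      unfolding \<gamma>t1 power2_norm_eq_inner
      by (simp add: inner_add_left inner_add_right inner_commute[of qq P] algebra_simps power2_eq_square)
    note SB = S_bounds[OF \<beta>_pos \<sigma>t(1) reg, of P qq]
    have S4: "4 * Mnorm2 G H B \<beta> \<tau> \<theta> (zs - (x 0, y 0, \<gamma> 0)) \<ge> 3 * qnorm2 H e
       + ((3 - 3*\<tau> - 2*\<sigma>t) * \<beta>^2 * (P \<bullet> P) + (4 - \<tau> - \<theta> - 2*\<sigma>t) * (qq \<bullet> qq)
          + 4 * (1 - \<tau> - \<sigma>t) * \<beta> * (P \<bullet> qq)) / \<beta>"
      using FC unfolding Dsplit[symmetric] NQ S_id[OF \<beta>_pos] .
    have "Mnorm2 G H B \<beta> \<tau> \<theta> (zs - (x 0, y 0, \<gamma> 0)) \<ge> qnorm2 H e / 4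
       \<and> Mnorm2 G H B \<beta> \<tau> \<theta> (zs - (x 0, y 0, \<gamma> 0)) \<ge> - vartheta \<tau> \<theta> \<sigma>t * (P \<bullet> qq) / 2"
      by (rule concl_comb[OF S4 SB(1) SB(2) Hpsd])
    then show ?thesis by (simp add: e_def P_def qq_def)
  qed
  obtain zs0 where zs0: "zs0 \<in> T_zeros f g A B b" using sol_exists by blast
  define L where "L = max (qnorm2 H (y 1 - y 0) / 4) (- vartheta \<tau> \<theta> \<sigma>t * (p 1 \<bullet> q 1) / 2)"
  have lb: "d0 f g A B b G H \<beta> \<tau> \<theta> (x 0, y 0, \<gamma> 0) \<ge> ereal L"
    unfolding d0_def
  proof (rule INF_greatest)
    fix zs assume "zs \<in> T_zeros f g A B b"
    from pa[OF this] show "ereal L \<le> ereal (Mnorm2 G H B \<beta> \<tau> \<theta> (zs - (x 0, y 0, \<gamma> 0)))"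
      by (simp add: L_def)
  qed
  have ub: "d0 f g A B b G H \<beta> \<tau> \<theta> (x 0, y 0, \<gamma> 0) \<le> ereal (Mnorm2 G H B \<beta> \<tau> \<theta> (zs0 - (x 0, y 0, \<gamma> 0)))"
    unfolding d0_def by (rule INF_lower[OF zs0])
  obtain r where r: "d0 f g A B b G H \<beta> \<tau> \<theta> (x 0, y 0, \<gamma> 0) = ereal r"
    using lb ub by (cases "d0 f g A B b G H \<beta> \<tau> \<theta> (x 0, y 0, \<gamma> 0)") auto
  have rL: "r \<ge> qnorm2 H (y 1 - y 0) / 4" "r \<ge> - vartheta \<tau> \<theta> \<sigma>t * (p 1 \<bullet> q 1) / 2"
    using lb r by (auto simp: L_def)
  have A1: "min (2 * vartheta \<tau> \<theta> \<sigma>t * (p 1 \<bullet> q 1)) (- qnorm2 H (y 1 - y 0)) \<ge> -4 * r"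
    by (rule end_comb[OF rL])
  have A2: "ereal (min (2 * vartheta \<tau> \<theta> \<sigma>t * (p 1 \<bullet> q 1)) (- qnorm2 H (y 1 - y 0)))
           \<ge> - 4 * d0 f g A B b G H \<beta> \<tau> \<theta> (x 0, y 0, \<gamma> 0)"
    unfolding r using A1 by simp
  show ?thesis using A2 pb by blast
qed

end
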